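(* Let $G\subset GL_d(\mathbb R)$ act on $\mathfrak g_{\le n}(\mathbb R^d)$, let $U\subset\mathfrak g_{\le n}(\mathbb R^d)$ be a non-empty, $G$-invariant, semialgebraic subset, and let $\varrho:U\to G$ be an almost-polynomial moving frame for the action of $G$ on $U$, with associated maps $\lambda,\kappa$. Then the non-zero components of $\mathbf c\mapsto\lambda(\mathbf c)\varrho(\mathbf c)\cdot\mathbf c$ form a fundamental set of invariants consisting only of polynomial invariants.
   Context: $\mathfrak g_{\le n}(\mathbb R^d)$ is the free step-$n$ nilpotent Lie algebra realized inside the truncated tensor algebra $T_{\le n}(\mathbb R^d)$ (spanned by words over $\{1,\dots,d\}$ of length $\le n$, concatenation product), $\mathfrak g_{\le n}=\bigoplus_{k=1}^nW_k$, $W_1=\mathrm{span}\{1,\dots,d\}$, $W_{k+1}=[W_1,W_k]$; $B=(b_{ij})\in GL_d(\mathbb R)$ acts by the algebra automorphism sending letter $i\mapsto\sum_jb_{ji}j$ (i.e. $B^{\otimes k}$ on level $k$), which preserves $\mathfrak g_{\le n}$; $\mathbb R[\mathfrak g_{\le n}(\mathbb R^d)]$ denotes polynomial functions in its coordinates. A moving frame is a smooth map $\varrho:U\to G$ with $\varrho(g\cdot\mathbf c)=\varrho(\mathbf c)g^{-1}$. It is almost-polynomial if there are maps $\lambda:U\to GL_d(\mathbb R)$ and $\kappa:\mathfrak g_{\le n}(\mathbb R^d)\to GL_d(\mathbb R)$ such that $\lambda$ is $G$-invariant, $\lambda(\mathbf c)$ is diagonal for all $\mathbf c\in U$, $\lambda_{ii}\varrho_{ij}\in\mathbb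 R[\mathfrak g_{\le n}(\mathbb R^d)]$ for all $i,j$, and $\lambda(\mathbf c)=\kappa\big(\lambda(\mathbf c)\varrho(\mathbf c)\cdot\mathbf c\big)$ for all $\mathbf c\in U$. A set of invariants $\{J_1,\dots,J_m\}$ on $U$ is fundamental if every $G$-invariant function $I$ on $U$ can be written $I(p)=I'(J_1(p),\dots,J_m(p))$ for some function $I'$. *)

theory Defs
  imports "HOL-Analysis.Analysis"
begin

text \<open>Letters are the elements of a finite type 'd (so d = CARD('d)); elements of the
truncated tensor algebra are coefficient functions on words ('d list), vanishing on words
of length > n.\<close>

definition Tsp :: "nat \<Rightarrow> ('d list \<Rightarrow> real) set" where
  "Tsp n = {x. \<forall>w. n < length w \<longrightarrow> x w = 0}"

definition trunc :: "nat \<Rightarrow> ('d list \<Rightarrow> real) \<Rightarrow> ('d list \<Rightarrow> real)" where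
  "trunc n x = (\<lambda>w. if length w \<le> n then x w else 0)"

definition letter :: "'d \<Rightarrow> ('d list \<Rightarrow> real)" where
  "letter i = (\<lambda>w. if w = [i] then 1 else 0)"

definition tmul :: "nat \<Rightarrow> ('d list \<Rightarrow> real) \<Rightarrow> ('d list \<Rightarrow> real) \<Rightarrow> ('d list \<Rightarrow> real)" where
  "tmul n x y = (\<lambda>w. if length w \<le> n then (\<Sum>k\<le>length w. x (take k w) * y (drop k w)) else 0)"

definition tbracket :: "nat \<Rightarrow> ('d list \<Rightarrow> real) \<Rightarrow> ('d list \<Rightarrow> real) \<Rightarrow> ('d list \<Rightarrow> real)" where
  "tbracket n x y = (\<lambda>w. tmul n x y w - tmul n y x w)"

text \<open>The free step-n nilpotent Lie algebra: the Lie subalgebra of T_{<=n} generated by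
the letters (= W_1 + ... + W_n).\<close>
inductive_set lie_alg :: "nat \<Rightarrow> ('d list \<Rightarrow> real) set" for n where
  zero: "(\<lambda>w. 0) \<in> lie_alg n"
| gen: "trunc n (letter i) \<in> lie_alg n"
| add: "x \<in> lie_alg n \<Longrightarrow> y \<in> lie_alg n \<Longrightarrow> (\<lambda>w. x w + y w) \<in> lie_alg n"
| scale: "x \<in> lie_alg n \<Longrightarrow> (\<lambda>w. c * x w) \<in> lie_alg n"
| bracket: "x \<in> lie_alg n \<Longrightarrow> y \<in> lie_alg n \<Longrightarrow> tbracket n x y \<in> lie_alg n"

text \<open>Action of a matrix B: letter i goes to sum_j b_ji j, i.e. B^{\<otimes>k} on level k.\<close>
definition act :: "real^'d^'d \<Rightarrow> ('d::finite list \<Rightarrow> real) \<Rightarrow> ('d list \<Rightarrow> real)" where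
  "act B x = (\<lambda>w. \<Sum>u\<in>{u. length u = length w}.
                   (\<Prod>m<length w. B $ (w ! m) $ (u ! m)) * x u)"

definition matgroup :: "(real^'d^'d) set \<Rightarrow> bool" where
  "matgroup G \<longleftrightarrow> G \<subseteq> {A. invertible A} \<and> mat 1 \<in> G \<and>
     (\<forall>A\<in>G. \<forall>B\<in>G. A ** B \<in> G) \<and> (\<forall>A\<in>G. matrix_inv A \<in> G)"

inductive_set poly_fun :: "(('d list \<Rightarrow> real) \<Rightarrow> real) set" where
  const: "(\<lambda>x. c) \<in> poly_fun"
| coord: "(\<lambda>x. x w) \<in> poly_fun"
| add: "p \<in> poly_fun \<Longrightarrow> q \<in> poly_fun \<Longrightarrow> (\<lambda>x. p x + q x) \<in> poly_fun"
| mult: "p \<in> poly_fun \<Longrightarrow> q \<in> poly_fun \<Longrightarrow> (\<lambda>x. p x * q x) \<in> poly_fun"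

definition polynomial_on :: "('d list \<Rightarrow> real) set \<Rightarrow> (('d list \<Rightarrow> real) \<Rightarrow> real) \<Rightarrow> bool" where
  "polynomial_on U f \<longleftrightarrow> (\<exists>p\<in>poly_fun. \<forall>c\<in>U. f c = p c)"

inductive_set semialg :: "nat \<Rightarrow> ('d list \<Rightarrow> real) set set" for n where
  basic: "p \<in> poly_fun \<Longrightarrow> {x \<in> Tsp n. p x > 0} \<in> semialg n"
| compl: "S \<in> semialg n \<Longrightarrow> Tsp n - S \<in> semialg n"
| union: "S \<in> semialg n \<Longrightarrow> S' \<in> semialg n \<Longrightarrow> S \<union> S' \<in> semialg n"

text \<open>Smoothness (C^\<infinity>) via iterated partial derivatives in the word coordinates,
on an open set (product topology) intersected with T_{<=n}.\<close>
definition unitv :: "'d list \<Rightarrow> ('d list \<Rightarrow> real)" where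
  "unitv w = (\<lambda>v. if v = w then 1 else 0)"

definition pdiff :: "'d list \<Rightarrow> (('d list \<Rightarrow> real) \<Rightarrow> real) \<Rightarrow> (('d list \<Rightarrow> real) \<Rightarrow> real)" where
  "pdiff w F = (\<lambda>x. deriv (\<lambda>t. F (\<lambda>v. x v + t * unitv w v)) 0)"

fun ipd :: "'d list list \<Rightarrow> (('d list \<Rightarrow> real) \<Rightarrow> real) \<Rightarrow> (('d list \<Rightarrow> real) \<Rightarrow> real)" where
  "ipd [] F = F"
| "ipd (w # ws) F = pdiff w (ipd ws F)"

definition Cinf_on :: "nat \<Rightarrow> ('d list \<Rightarrow> real) set \<Rightarrow> (('d list \<Rightarrow> real) \<Rightarrow> real) \<Rightarrow> bool" where
  "Cinf_on n V F \<longleftrightarrow> (\<forall>ws. (\<forall>w\<in>set ws. length w \<le> n) \<longrightarrow>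
      continuous_on (V \<inter> Tsp n) (ipd ws F) \<and>
      (\<forall>w x. length w \<le> n \<longrightarrow> x \<in> V \<inter> Tsp n \<longrightarrow>
          (\<lambda>t. ipd ws F (\<lambda>v. x v + t * unitv w v)) differentiable (at 0)))"

definition smooth_map_on :: "nat \<Rightarrow> ('d list \<Rightarrow> real) set \<Rightarrow> (('d list \<Rightarrow> real) \<Rightarrow> real^'d^'d) \<Rightarrow> bool" where
  "smooth_map_on n U f \<longleftrightarrow> (\<exists>V F. open V \<and> U \<subseteq> V \<and> (\<forall>c\<in>U. F c = f c) \<and>
      (\<forall>i j. Cinf_on n V (\<lambda>x. F x $ i $ j)))"

definition G_invariant_set :: "(real^'d^'d) set \<Rightarrow> ('d::finite list \<Rightarrow> real) set \<Rightarrow> bool" where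
  "G_invariant_set G U \<longleftrightarrow> (\<forall>g\<in>G. \<forall>c\<in>U. act g c \<in> U)"

definition invariant_fun :: "(real^'d^'d) set \<Rightarrow> ('d::finite list \<Rightarrow> real) set \<Rightarrow> (('d list \<Rightarrow> real) \<Rightarrow> 'b) \<Rightarrow> bool" where
  "invariant_fun G U f \<longleftrightarrow> (\<forall>g\<in>G. \<forall>c\<in>U. f (act g c) = f c)"

definition moving_frame :: "(real^'d^'d) set \<Rightarrow> nat \<Rightarrow> ('d::finite list \<Rightarrow> real) set \<Rightarrow> (('d list \<Rightarrow> real) \<Rightarrow> real^'d^'d) \<Rightarrow> bool" where
  "moving_frame G n U rho \<longleftrightarrow> (\<forall>c\<in>U. rho c \<in> G) \<and> smooth_map_on n U rho \<and>
     (\<forall>g\<in>G. \<forall>c\<in>U. rho (act g c) = rho c ** matrix_inv g)"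

definition almost_polynomial_wrt :: "(real^'d^'d) set \<Rightarrow> nat \<Rightarrow> ('d::finite list \<Rightarrow> real) set \<Rightarrow>
    (('d list \<Rightarrow> real) \<Rightarrow> real^'d^'d) \<Rightarrow> (('d list \<Rightarrow> real) \<Rightarrow> real^'d^'d) \<Rightarrow>
    (('d list \<Rightarrow> real) \<Rightarrow> real^'d^'d) \<Rightarrow> bool" where
  "almost_polynomial_wrt G n U rho lam kappa \<longleftrightarrow>
     moving_frame G n U rho \<and>
     (\<forall>c\<in>U. invertible (lam c)) \<and> (\<forall>x\<in>lie_alg n. invertible (kappa x)) \<and>
     invariant_fun G U lam \<and>
     (\<forall>c\<in>U. \<forall>i j. i \<noteq> j \<longrightarrow> lam c $ i $ j = 0) \<and>
     (\<forall>i j. polynomial_on U (\<lambda>c. lam c $ i $ i * rho c $ i $ j)) \<and>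
     (\<forall>c\<in>U. lam c = kappa (act (lam c ** rho c) c))"

definition fundamental_set :: "(real^'d^'d) set \<Rightarrow> ('d::finite list \<Rightarrow> real) set \<Rightarrow>
    ('i \<Rightarrow> ('d list \<Rightarrow> real) \<Rightarrow> real) \<Rightarrow> 'i set \<Rightarrow> bool" where
  "fundamental_set G U J A \<longleftrightarrow> (\<forall>a\<in>A. invariant_fun G U (J a)) \<and>
     (\<forall>I :: ('d list \<Rightarrow> real) \<Rightarrow> real. invariant_fun G U I \<longrightarrow>
        (\<exists>I'. \<forall>c\<in>U. I c = I' (\<lambda>a. if a \<in> A then J a c else 0)))"

end

theory Submission
  imports Defs
begin

lemma minv:
  fixes A :: "real^'n^'n"
  assumes "invertible A"
  shows "A ** matrix_inv A = mat 1" "matrix_inv A ** A = mat 1"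
proof -
  have "\<exists>A'. A ** A' = mat 1 \<and> A' ** A = mat 1" using assms by (auto simp: invertible_def)
  hence "A ** matrix_inv A = mat 1 \<and> matrix_inv A ** A = mat 1"
    unfolding matrix_inv_def by (rule someI_ex)
  thus "A ** matrix_inv A = mat 1" "matrix_inv A ** A = mat 1" by auto
qed

lemma lists_Suc_eq:
  "{u::'a list. length u = Suc k} = (\<lambda>(a,u). a # u) ` (UNIV \<times> {u. length u = k})"
  by (auto simp: length_Suc_conv image_iff)

lemma sum_lists_Suc:
  fixes g :: "'a::finite list \<Rightarrow> real"
  shows "(\<Sum>u\<in>{u. length u = Suc k}. g u) = (\<Sum>a\<in>UNIV. \<Sum>u\<in>{u. length u = k}. g (a # u))"
proof -
  have inj: "inj_on (\<lambda>(a,u). a # u) (UNIV \<times> {u::'a list. length u = k})"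
    by (auto simp: inj_on_def)
  have "(\<Sum>u\<in>{u. length u = Suc k}. g u) = (\<Sum>p\<in>UNIV \<times> {u. length u = k}. g (fst p # snd p))"
    unfolding lists_Suc_eq by (subst sum.reindex[OF inj]) (auto intro!: sum.cong)
  also have "\<dots> = (\<Sum>a\<in>UNIV. \<Sum>u\<in>{u. length u = k}. g (a # u))"
    by (simp add: sum.cartesian_product[of "\<lambda>a u. g (a#u)"] case_prod_beta)
  finally show ?thesis .
qed

lemma sum_prod_lists:
  fixes F :: "nat \<Rightarrow> 'a::finite \<Rightarrow> real"
  shows "(\<Sum>u\<in>{u. length u = k}. \<Prod>m<k. F m (u ! m)) = (\<Prod>m<k. \<Sum>j\<in>UNIV. F m j)"
proof (induction k arbitrary: F)
  case 0
  then show ?case by simp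
next
  case (Suc k)
  have "(\<Sum>u\<in>{u. length u = Suc k}. \<Prod>m<Suc k. F m (u ! m))
     = (\<Sum>a\<in>UNIV. \<Sum>u\<in>{u. length u = k}. F 0 a * (\<Prod>m<k. F (Suc m) (u ! m)))"
    unfolding sum_lists_Suc prod.lessThan_Suc_shift by simp
  also have "\<dots> = (\<Sum>a\<in>UNIV. F 0 a * (\<Prod>m<k. \<Sum>j\<in>UNIV. F (Suc m) j))"
    by (simp add: sum_distrib_left[symmetric] Suc.IH[of "\<lambda>m. F (Suc m)"])
  also have "\<dots> = (\<Prod>m<Suc k. \<Sum>j\<in>UNIV. F m j)"
    unfolding prod.lessThan_Suc_shift by (simp add: sum_distrib_right)
  finally show ?case .
qed

lemma finite_lists_len: "finite {u::'a::finite list. length u = k}"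
  using finite_lists_length_eq[of "UNIV::'a set" k] by simp

lemma act_act:
  fixes A B :: "real^'d::finite^'d"
  shows "act A (act B x) = act (A ** B) x"
proof (rule ext)
  fix w :: "'d list"
  define L where "L = {u::'d list. length u = length w}"
  have fin: "finite L" unfolding L_def using finite_lists_len by blast
  have "act A (act B x) w = (\<Sum>u\<in>L. (\<Prod>m<length w. A $ (w!m) $ (u!m)) *
          (\<Sum>v\<in>L. (\<Prod>m<length w. B $ (u!m) $ (v!m)) * x v))"
    unfolding act_def L_def by (intro sum.cong) auto
  also have "\<dots> = (\<Sum>u\<in>L. \<Sum>v\<in>L. (\<Prod>m<length w. A $ (w!m) $ (u!m)) *
          ((\<Prod>m<length w. B $ (u!m) $ (v!m)) * x v))"
    by (simp add: sum_distrib_left)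
  also have "\<dots> = (\<Sum>v\<in>L. \<Sum>u\<in>L. (\<Prod>m<length w. A $ (w!m) $ (u!m) * B $ (u!m) $ (v!m)) * x v)"
    by (subst sum.swap) (simp add: prod.distrib mult.assoc)
  also have "\<dots> = (\<Sum>v\<in>L. (\<Sum>u\<in>L. \<Prod>m<length w. A $ (w!m) $ (u!m) * B $ (u!m) $ (v!m)) * x v)"
    by (simp add: sum_distrib_right)
  also have "\<dots> = (\<Sum>v\<in>L. (\<Prod>m<length w. (A ** B) $ (w!m) $ (v!m)) * x v)"
    unfolding L_def by (subst sum_prod_lists) (simp add: matrix_matrix_mult_def)
  also have "\<dots> = act (A ** B) x w" unfolding act_def L_def by simp
  finally show "act A (act B x) w = act (A ** B) x w" .
qed

lemma lie_alg_Tsp: "x \<in> lie_alg n \<Longrightarrow> x \<in> Tsp n"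
  by (induction rule: lie_alg.induct)
     (auto simp: Tsp_def trunc_def tbracket_def tmul_def)

lemma poly_cong: "polynomial_on U f \<Longrightarrow> (\<And>c. c \<in> U \<Longrightarrow> f c = g c) \<Longrightarrow> polynomial_on U g"
  unfolding polynomial_on_def by metis

lemma poly_const: "polynomial_on U (\<lambda>c. k)"
  unfolding polynomial_on_def by (rule bexI[OF _ poly_fun.const[of k]]) simp

lemma poly_coord: "polynomial_on U (\<lambda>c. c w)"
  unfolding polynomial_on_def by (rule bexI[OF _ poly_fun.coord[of w]]) simp

lemma poly_add: "polynomial_on U f \<Longrightarrow> polynomial_on U g \<Longrightarrow> polynomial_on U (\<lambda>c. f c + g c)"
  unfolding polynomial_on_def
proof (elim bexE)
  fix p q assume "p \<in> poly_fun" "\<forall>c\<in>U. f c = p c" "q \<in> poly_fun" "\<forall>c\<in>U. g c = q c"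
  thus "\<exists>r\<in>poly_fun. \<forall>c\<in>U. f c + g c = r c"
    by (intro bexI[of _ "\<lambda>x. p x + q x"]) (auto intro: poly_fun.add)
qed

lemma poly_mult: "polynomial_on U f \<Longrightarrow> polynomial_on U g \<Longrightarrow> polynomial_on U (\<lambda>c. f c * g c)"
  unfolding polynomial_on_def
proof (elim bexE)
  fix p q assume "p \<in> poly_fun" "\<forall>c\<in>U. f c = p c" "q \<in> poly_fun" "\<forall>c\<in>U. g c = q c"
  thus "\<exists>r\<in>poly_fun. \<forall>c\<in>U. f c * g c = r c"
    by (intro bexI[of _ "\<lambda>x. p x * q x"]) (auto intro: poly_fun.mult)
qed

lemma poly_sum: "finite S \<Longrightarrow> (\<And>s. s \<in> S \<Longrightarrow> polynomial_on U (f s)) \<Longrightarrow>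
    polynomial_on U (\<lambda>c. \<Sum>s\<in>S. f s c)"
  by (induction S rule: finite_induct) (auto intro: poly_const poly_add)

lemma poly_prod: "finite S \<Longrightarrow> (\<And>s. s \<in> S \<Longrightarrow> polynomial_on U (f s)) \<Longrightarrow>
    polynomial_on U (\<lambda>c. \<Prod>s\<in>S. f s c)"
  by (induction S rule: finite_induct) (auto intro: poly_const poly_mult)

theorem proposition4p10:
  fixes G :: "(real^'d::finite^'d) set" and n :: nat and U :: "('d list \<Rightarrow> real) set"
    and rho lam kappa :: "('d list \<Rightarrow> real) \<Rightarrow> real^'d^'d"
  assumes "matgroup G"
    and "U \<noteq> {}" and "U \<subseteq> lie_alg n" and "G_invariant_set G U" and "U \<in> semialg n"
    and "almost_polynomial_wrt G n U rho lam kappa"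
  shows "fundamental_set G U (\<lambda>w c. act (lam c ** rho c) c w)
           {w. length w \<le> n \<and> (\<exists>c\<in>U. act (lam c ** rho c) c w \<noteq> 0)}
       \<and> (\<forall>w\<in>{w. length w \<le> n \<and> (\<exists>c\<in>U. act (lam c ** rho c) c w \<noteq> 0)}.
              polynomial_on U (\<lambda>c. act (lam c ** rho c) c w))"
proof -
  define J where "J c = act (lam c ** rho c) c" for c
  define A where "A = {w. length w \<le> n \<and> (\<exists>c\<in>U. act (lam c ** rho c) c w \<noteq> 0)}"
  have ap: "almost_polynomial_wrt G n U rho lam kappa" by fact
  have mf: "moving_frame G n U rho" using ap unfolding almost_polynomial_wrt_def by blast
  have rhoG: "\<And>c. c \<in> U \<Longrightarrow> rho c \<in> G" using mf unfolding moving_frame_def by blast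
  have rhoeq: "\<And>g c. g \<in> G \<Longrightarrow> c \<in> U \<Longrightarrow> rho (act g c) = rho c ** matrix_inv g"
    using mf unfolding moving_frame_def by blast
  have laminv: "\<And>c. c \<in> U \<Longrightarrow> invertible (lam c)" using ap unfolding almost_polynomial_wrt_def by simp
  have lamI: "invariant_fun G U lam" using ap unfolding almost_polynomial_wrt_def by blast
  have lamdiag: "\<And>c i j. c \<in> U \<Longrightarrow> i \<noteq> j \<Longrightarrow> lam c $ i $ j = 0"
    using ap unfolding almost_polynomial_wrt_def by blast
  have lampoly: "\<And>i j. polynomial_on U (\<lambda>c. lam c $ i $ i * rho c $ i $ j)"
    using ap unfolding almost_polynomial_wrt_def by blast
  have kap: "\<And>c. c \<in> U \<Longrightarrow> lam c = kappa (act (lam c ** rho c) c)"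
    using ap unfolding almost_polynomial_wrt_def by blast
  have Ginv: "\<And>g. g \<in> G \<Longrightarrow> invertible g" using assms(1) unfolding matgroup_def by blast
  have Jinv: "J (act g c) = J c" if g: "g \<in> G" and c: "c \<in> U" for g c
  proof -
    have "J (act g c) = act (lam c ** (rho c ** matrix_inv g)) (act g c)"
      unfolding J_def using lamI g c rhoeq[OF g c] unfolding invariant_fun_def by simp
    also have "\<dots> = act (lam c ** (rho c ** matrix_inv g) ** g) c" by (simp add: act_act)
    also have "lam c ** (rho c ** matrix_inv g) ** g = lam c ** rho c"
      by (simp add: matrix_mul_assoc[symmetric] minv(2)[OF Ginv[OF g]])
    finally show ?thesis unfolding J_def .
  qed
  have part1: "fundamental_set G U (\<lambda>w c. J c w) A"
    unfolding fundamental_set_def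
  proof (intro conjI ballI allI impI)
    fix a assume "a \<in> A"
    show "invariant_fun G U (\<lambda>c. J c a)" unfolding invariant_fun_def using Jinv by simp
  next
    fix I :: "('d list \<Rightarrow> real) \<Rightarrow> real"
    assume I: "invariant_fun G U I"
    show "\<exists>I'. \<forall>c\<in>U. I c = I' (\<lambda>a. if a \<in> A then J c a else 0)"
    proof (intro exI ballI)
      fix c assume c: "c \<in> U"
      have "(\<lambda>a. if a \<in> A then J c a else 0) = J c"
      proof
        fix a show "(if a \<in> A then J c a else 0) = J c a"
        proof (cases "a \<in> A")
          case False
          show ?thesis
          proof (cases "length a \<le> n")
            case True
            then show ?thesis using False c unfolding A_def J_def by auto
          next
            case ln: False
            have "c \<in> Tsp n" using lie_alg_Tsp c assms(3) by blast
            hence "\<And>u. length u = length a \<Longrightarrow> c u = 0" using ln unfolding Tsp_def by auto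
            then show ?thesis using False unfolding J_def act_def by simp
          qed
        qed simp
      qed
      moreover have "kappa (J c) = lam c" using kap[OF c] unfolding J_def by simp
      moreover have "act (matrix_inv (lam c)) (J c) = act (rho c) c"
        unfolding J_def act_act
        by (simp add: matrix_mul_assoc minv(2)[OF laminv[OF c]])
      moreover have "I (act (rho c) c) = I c" using I rhoG[OF c] c unfolding invariant_fun_def by blast
      ultimately show "I c = (\<lambda>f. I (act (matrix_inv (kappa f)) f)) (\<lambda>a. if a \<in> A then J c a else 0)"
        by simp
    qed
  qed
  have entry: "polynomial_on U (\<lambda>c. (lam c ** rho c) $ i $ j)" for i j
  proof (rule poly_cong[OF lampoly[of i j]])
    fix c assume c: "c \<in> U"
    have "(lam c ** rho c) $ i $ j = (\<Sum>k\<in>UNIV. if k = i then lam c $ i $ k * rho c $ k $ j else 0)"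
      unfolding matrix_matrix_mult_def vec_lambda_beta by (rule sum.cong) (auto simp: lamdiag[OF c])
    also have "\<dots> = lam c $ i $ i * rho c $ i $ j" by simp
    finally show "lam c $ i $ i * rho c $ i $ j = (lam c ** rho c) $ i $ j" by simp
  qed
  have part2: "polynomial_on U (\<lambda>c. J c w)" for w
    unfolding J_def act_def
    by (intro poly_sum poly_mult poly_prod poly_coord entry finite_lists_len finite_lessThan)
  show ?thesis using part1 part2 unfolding J_def A_def by simp
qed

end
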